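(* Let $\Gamma$ be as below, let $k>v_1$ be an integer, and let $\varphi=(x(t),y(t))$ be the $k$-jet of an element of $\Sigma_\Gamma$ (so $x(t)=t^{v_0}$ and $y(t)$ is a polynomial of degree $\le k$ starting with $t^{v_1}$). Define $$T_1=\{\,j^k\big(x'(t)\epsilon+\varphi^*(g),\ y'(t)\epsilon+\varphi^*(h)\big):\ \epsilon\in\mathcal M_1^2,\ g,h\in\mathcal M_2^2\,\},$$ $$\widetilde T=\{\,j^k\big(x'(t)\epsilon+\varphi^*(g),\ y'(t)\epsilon+\varphi^*(h)\big):\ \epsilon\in\mathcal M_1^2,\ g\in\langle X^2,Y\rangle,\ h\in\mathcal M_2^2\,\}$$ (these are the tangent spaces at $\varphi$ to the orbits of $\varphi$ under the groups of $k$-jets of $\mathcal A_1$, resp. $\widetilde{\mathcal A}$). Then for $b\in\mathbb C$, $b\ne0$: $(0,bt^k)\in T_1$ if and only if there exist $g,h\in\mathcal M_2^2$ with $\mathrm{ord}_t\big(\varphi^*(h)x'(t)-\varphi^*(g)y'(t)\big)=k+v_0-1$; and $(0,bt^k)\in\widetilde T$ if and only if there exist $g\in\langle X^2,Y\rangle$, $h\in\mathcal M_2^2$ with $\mathrm{ord}_t\big(\varphi^*(h)x'(t)-\varphi^*(g)y'(t)\big)=k+v_0-1$.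
   Context: $\mathcal O_1=\mathbb C\{t\}$, $\mathcal O_2=\mathbb C\{X,Y\}$, with maximal ideals $\mathcal M_1,\mathcal M_2$; $\varphi^*(h)=h(x(t),y(t))$; $j^k$ denotes the $k$-jet (truncation modulo $t^{k+1}$, componentwise); $\langle X^2,Y\rangle$ is the ideal of $\mathcal O_2$ generated by $X^2$ and $Y$. $\Gamma$ is the semigroup of values of a plane branch with minimal generators $v_0<v_1<\cdots<v_g$ and conductor $c$; $\Sigma_\Gamma$ is the set of Puiseux parametrizations $(t^{v_0},t^{v_1}+\sum_{v_1<i<c}a_it^i)$ (primitive, $v_0\nmid v_1$) whose semigroup of values $\{\mathrm{ord}_t h(x(t),y(t)): h\in\mathcal O_2,\ h(x,y)\ne0\}$ equals $\Gamma$. *)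

theory Defs
  imports "HOL-Computational_Algebra.Formal_Power_Series"
begin

definition conv1 :: "complex fps \<Rightarrow> bool" where
  "conv1 e \<longleftrightarrow> (\<exists>r>0. \<exists>M. \<forall>n. norm (fps_nth e n) * r ^ n \<le> M)"

text \<open>Elements of O_2 = C{X,Y}, represented by their coefficient functions
  (c i j is the coefficient of X^i Y^j), required to converge.\<close>
definition conv2 :: "(nat \<Rightarrow> nat \<Rightarrow> complex) \<Rightarrow> bool" where
  "conv2 c \<longleftrightarrow> (\<exists>r>0. \<exists>M. \<forall>i j. norm (c i j) * r ^ (i + j) \<le> M)"

definition M1sq :: "complex fps set" where
  "M1sq = {e. conv1 e \<and> fps_nth e 0 = 0 \<and> fps_nth e 1 = 0}"

definition M2sq :: "(nat \<Rightarrow> nat \<Rightarrow> complex) set" where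
  "M2sq = {c. conv2 c \<and> c 0 0 = 0 \<and> c 1 0 = 0 \<and> c 0 1 = 0}"

text \<open>The ideal generated by X^2 and Y in O_2: all X^2 a + Y b with a, b in O_2.\<close>
definition X2Y_ideal :: "(nat \<Rightarrow> nat \<Rightarrow> complex) set" where
  "X2Y_ideal = {c. \<exists>a b. conv2 a \<and> conv2 b \<and>
      c = (\<lambda>i j. (if 2 \<le> i then a (i - 2) j else 0) + (if 1 \<le> j then b i (j - 1) else 0))}"

text \<open>Pull-back phi^*(h) = h(x(t),y(t)), for x, y without constant term
  (then x^i y^j has order at least i+j, so the coefficient sum is finite).\<close>
definition pull :: "complex fps \<Rightarrow> complex fps \<Rightarrow> (nat \<Rightarrow> nat \<Rightarrow> complex) \<Rightarrow> complex fps" where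
  "pull x y c = Abs_fps (\<lambda>n. \<Sum>i\<le>n. \<Sum>j\<le>n. c i j * fps_nth (x ^ i * y ^ j) n)"

definition jet :: "nat \<Rightarrow> complex fps \<Rightarrow> complex fps" where
  "jet k f = Abs_fps (\<lambda>n. if n \<le> k then fps_nth f n else 0)"

definition value_semigroup :: "complex fps \<Rightarrow> complex fps \<Rightarrow> nat set" where
  "value_semigroup x y = {subdegree (pull x y h) | h. conv2 h \<and> pull x y h \<noteq> 0}"

definition mingens :: "nat set \<Rightarrow> nat set" where
  "mingens \<Gamma> = {v \<in> \<Gamma>. 0 < v \<and> \<not> (\<exists>a\<in>\<Gamma>. \<exists>b\<in>\<Gamma>. 0 < a \<and> 0 < b \<and> a + b = v)}"

definition gen0 :: "nat set \<Rightarrow> nat" where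
  "gen0 \<Gamma> = Min (mingens \<Gamma>)"

definition gen1 :: "nat set \<Rightarrow> nat" where
  "gen1 \<Gamma> = Min (mingens \<Gamma> - {gen0 \<Gamma>})"

definition conductor :: "nat set \<Rightarrow> nat" where
  "conductor \<Gamma> = (LEAST c. \<forall>n\<ge>c. n \<in> \<Gamma>)"

text \<open>Primitive parametrization: not of the form psi(t^m) with m > 1.\<close>
definition primitive :: "complex fps \<Rightarrow> complex fps \<Rightarrow> bool" where
  "primitive x y \<longleftrightarrow> \<not> (\<exists>m>1. \<forall>n. \<not> m dvd n \<longrightarrow> fps_nth x n = 0 \<and> fps_nth y n = 0)"

definition Sigma :: "nat set \<Rightarrow> (complex fps \<times> complex fps) set" where
  "Sigma \<Gamma> = {(x, y). \<exists>a :: nat \<Rightarrow> complex.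
      x = fps_X ^ gen0 \<Gamma> \<and>
      y = fps_X ^ gen1 \<Gamma> + (\<Sum>i\<in>{gen1 \<Gamma> <..< conductor \<Gamma>}. fps_const (a i) * fps_X ^ i) \<and>
      primitive x y \<and> \<not> gen0 \<Gamma> dvd gen1 \<Gamma> \<and> value_semigroup x y = \<Gamma>}"

definition T1 :: "nat \<Rightarrow> complex fps \<Rightarrow> complex fps \<Rightarrow> (complex fps \<times> complex fps) set" where
  "T1 k x y = {(jet k (fps_deriv x * e + pull x y g), jet k (fps_deriv y * e + pull x y h)) | e g h.
      e \<in> M1sq \<and> g \<in> M2sq \<and> h \<in> M2sq}"

definition Ttilde :: "nat \<Rightarrow> complex fps \<Rightarrow> complex fps \<Rightarrow> (complex fps \<times> complex fps) set" where
  "Ttilde k x y = {(jet k (fps_deriv x * e + pull x y g), jet k (fps_deriv y * e + pull x y h)) | e g h.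
      e \<in> M1sq \<and> g \<in> X2Y_ideal \<and> h \<in> M2sq}"

text \<open>ord_t f = k + v0 - 1 (f nonzero, so that its order is finite).\<close>
definition has_ord :: "complex fps \<Rightarrow> nat \<Rightarrow> bool" where
  "has_ord f m \<longleftrightarrow> f \<noteq> 0 \<and> subdegree f = m"

end

theory Submission
  imports Defs
begin


lemma sum_mon_nth:
  "fps_nth (sum (\<lambda>i. fps_const (a i) * fps_X ^ i) {p<..<q} :: complex fps) n = (if p < n \<and> n < q then a n else 0)"
  by (simp add: fps_sum_nth mult.commute[of "a _"] if_distrib[of "(*) _"] sum.delta cong: if_cong)

lemma Min_bad: "\<not> (finite (A::nat set) \<and> A \<noteq> {}) \<Longrightarrow> Min A = the None"
  using Min.infinite[of A] by (auto simp add: Min.eq_fold')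

lemma mult_of_single:
  assumes "mingens G \<subseteq> {v}"
  shows "n \<in> G \<Longrightarrow> v dvd n"
proof (induction n rule: less_induct)
  case (less n)
  show ?case
  proof (cases "n = 0")
    case False
    show ?thesis
    proof (cases "n \<in> mingens G")
      case True then show ?thesis using assms by auto
    next
      case nm: False
      then obtain a b where "a \<in> G" "b \<in> G" "0 < a" "0 < b" "a + b = n"
        using less.prems False unfolding mingens_def by auto
      with less.IH[of a] less.IH[of b] show ?thesis by auto
    qed
  qed simp
qed

lemma dd: "(\<Sum>i\<le>n. \<Sum>j\<le>n. (if i = 0 \<and> j = (1::nat) then c else 0)) = (if 1 \<le> n then c else (0::complex))"
proof -
  have "(\<Sum>i\<le>n. \<Sum>j\<le>n. (if i = 0 \<and> j = (1::nat) then c else 0)) = (\<Sum>i\<le>n. if i = 0 then (\<Sum>j\<le>n. if j = 1 then c else 0) else 0)"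
    by (rule sum.cong) auto
  also have "\<dots> = (if 1 \<le> n then c else 0)" by (simp add: sum.delta)
  finally show ?thesis .
qed

lemma gen_facts:
  assumes "(x0, y0) \<in> Sigma \<Gamma>"
  shows "2 \<le> gen0 \<Gamma> \<and> gen0 \<Gamma> < gen1 \<Gamma> \<and> x0 = fps_X ^ gen0 \<Gamma> \<and>
         (\<forall>n<gen1 \<Gamma>. fps_nth y0 n = 0)"
proof -
  obtain a where x0: "x0 = fps_X ^ gen0 \<Gamma>"
    and y0: "y0 = fps_X ^ gen1 \<Gamma> + (\<Sum>i\<in>{gen1 \<Gamma> <..< conductor \<Gamma>}. fps_const (a i) * fps_X ^ i)"
    and nd: "\<not> gen0 \<Gamma> dvd gen1 \<Gamma>" and G: "value_semigroup x0 y0 = \<Gamma>"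
    using assms unfolding Sigma_def by auto
  have y0n: "fps_nth y0 n = (if n = gen1 \<Gamma> then 1 else 0) + (if gen1 \<Gamma> < n \<and> n < conductor \<Gamma> then a n else 0)" for n
    unfolding y0 by (simp add: sum_mon_nth)
  have ylow: "\<forall>n<gen1 \<Gamma>. fps_nth y0 n = 0" using y0n by auto
  define M where "M = mingens \<Gamma>"
  have g1nz: "gen1 \<Gamma> \<noteq> 0" using nd by (metis dvd_0_right)
  have fin: "finite M \<and> M \<noteq> {}"
  proof (rule ccontr)
    assume bad: "\<not> (finite M \<and> M \<noteq> {})"
    then have "\<not> (finite (M - {gen0 \<Gamma>}) \<and> M - {gen0 \<Gamma>} \<noteq> {})" by auto
    then have "gen1 \<Gamma> = gen0 \<Gamma>" using Min_bad bad unfolding gen0_def gen1_def M_def by metis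
    with nd show False by auto
  qed
  then have g0M: "gen0 \<Gamma> \<in> M" unfolding gen0_def M_def by auto
  then have g0pos: "0 < gen0 \<Gamma>" unfolding M_def mingens_def by auto
  have g0n1: "gen0 \<Gamma> \<noteq> 1" using nd by auto
  have "M - {gen0 \<Gamma>} \<noteq> {}"
  proof
    assume e: "M - {gen0 \<Gamma>} = {}"
    define h :: "nat \<Rightarrow> nat \<Rightarrow> complex" where "h = (\<lambda>i j. if i = 0 \<and> j = 1 then 1 else 0)"
    have ch: "conv2 h" unfolding conv2_def h_def by (rule exI[of _ 1]) (auto intro!: exI[of _ 1])
    have "pull x0 y0 h = y0"
    proof (rule fps_ext)
      fix n
      show "fps_nth (pull x0 y0 h) n = fps_nth y0 n"
      proof (cases "n = 0")
        case True then show ?thesis using ylow g1nz by (simp add: pull_def h_def)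
      next
        case False
        have "fps_nth (pull x0 y0 h) n = (\<Sum>i\<le>n. \<Sum>j\<le>n. (if i = 0 \<and> j = 1 then fps_nth y0 n else 0))"
          unfolding pull_def h_def fps_nth_Abs_fps by (intro sum.cong refl) auto
        also have "\<dots> = fps_nth y0 n" using False using dd[of "fps_nth y0 n" n] by simp
        finally show ?thesis .
      qed
    qed
    moreover have "y0 \<noteq> 0" using y0n[of "gen1 \<Gamma>"] by auto
    moreover have "subdegree y0 = gen1 \<Gamma>" by (rule subdegreeI) (use y0n ylow in auto)
    ultimately have "gen1 \<Gamma> \<in> \<Gamma>" using ch G unfolding value_semigroup_def by force
    moreover have "mingens \<Gamma> \<subseteq> {gen0 \<Gamma>}" using e unfolding M_def by auto
    ultimately have "gen0 \<Gamma> dvd gen1 \<Gamma>" using mult_of_single by blast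
    with nd show False by simp
  qed
  moreover have "finite (M - {gen0 \<Gamma>})" using fin by auto
  ultimately have "gen1 \<Gamma> \<in> M - {gen0 \<Gamma>}" unfolding gen1_def M_def by (metis Min_in)
  moreover have "gen0 \<Gamma> \<le> gen1 \<Gamma>" using fin calculation unfolding gen0_def M_def by auto
  ultimately show ?thesis using g0pos g0n1 x0 ylow by auto
qed



lemma ypow_low:
  fixes y :: "complex fps"
  assumes "\<forall>n<v1. fps_nth y n = 0"
  shows "m < v1 * j \<Longrightarrow> fps_nth (y ^ j) m = 0"
proof (induction j arbitrary: m)
  case (Suc j)
  have "fps_nth (y ^ Suc j) m = (\<Sum>a=0..m. fps_nth y a * fps_nth (y ^ j) (m - a))"
    by (simp add: fps_mult_nth)
  also have "\<dots> = 0"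
  proof (rule sum.neutral, rule ballI)
    fix a assume "a \<in> {0..m}"
    show "fps_nth y a * fps_nth (y ^ j) (m - a) = 0"
    proof (cases "a < v1")
      case True then show ?thesis using assms by simp
    next
      case False then have "m - a < v1 * j" using Suc.prems \<open>a \<in> {0..m}\<close> by auto
      then show ?thesis using Suc.IH by simp
    qed
  qed
  finally show ?case .
qed simp

lemma pull_low:
  fixes y :: "complex fps"
  assumes x: "x = fps_X ^ v0" and v: "1 \<le> v0" "v0 < v1" and y: "\<forall>n<v1. fps_nth y n = 0"
    and g: "g 0 0 = 0" "g 1 0 = 0" and n: "n \<le> v0"
  shows "fps_nth (pull x y g) n = 0"
proof -
  have hz: "g i j * fps_nth (x ^ i * y ^ j) n = 0" for i j
  proof -
    have e: "x ^ i * y ^ j = fps_X ^ (v0 * i) * y ^ j" using x by (simp add: power_mult)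
    show ?thesis
    proof (cases "j = 0")
      case True
      then show ?thesis
      proof (cases "i \<le> 1")
        case True with \<open>j = 0\<close> g show ?thesis by (cases i) auto
      next
        case False
        then have "n < v0 * i" using n v
          by (metis One_nat_def Suc_le_eq le_trans less_le_trans mult_le_cancel1 nat_mult_1_right not_less_eq_eq)
        then show ?thesis unfolding e by (simp add: fps_X_power_mult_nth)
      qed
    next
      case False
      have "n - v0 * i < v1 * j"
      proof -
        have "n - v0 * i \<le> v0" using n by simp
        also have "v0 < v1" by fact
        also have "v1 \<le> v1 * j" using False by simp
        finally show ?thesis .
      qed
      then show ?thesis unfolding e using ypow_low[OF y]
        by (simp add: fps_X_power_mult_nth)
    qed
  qed
  show ?thesis by (simp add: pull_def hz)
qed

lemma pull_scale: "pull x y (\<lambda>i j. c * g i j) = fps_const c * pull x y g"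
  by (rule fps_ext) (simp add: pull_def sum_distrib_left mult.assoc)

lemma M2sq_scale: "g \<in> M2sq \<Longrightarrow> (\<lambda>i j. c * g i j) \<in> M2sq"
proof -
  assume "g \<in> M2sq"
  then obtain r M where r: "r > 0" and b: "\<forall>i j. norm (g i j) * r ^ (i + j) \<le> M"
    and z: "g 0 0 = 0" "g 1 0 = 0" "g 0 1 = 0"
    unfolding M2sq_def conv2_def by auto
  have "norm (c * g i j) * r ^ (i + j) \<le> norm c * M" for i j
    using mult_left_mono[OF b[rule_format, of i j], of "norm c"]
    by (simp add: norm_mult mult.assoc)
  then show ?thesis using r z unfolding M2sq_def conv2_def by auto
qed

lemma conv2_scale: "conv2 g \<Longrightarrow> conv2 (\<lambda>i j. c * g i j)"
proof -
  assume "conv2 g"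
  then obtain r M where r: "r > 0" and b: "\<forall>i j. norm (g i j) * r ^ (i + j) \<le> M"
    unfolding conv2_def by auto
  have "norm (c * g i j) * r ^ (i + j) \<le> norm c * M" for i j
    using mult_left_mono[OF b[rule_format, of i j], of "norm c"]
    by (simp add: norm_mult mult.assoc)
  then show ?thesis using r unfolding conv2_def by auto
qed

lemma X2Y_scale: "g \<in> X2Y_ideal \<Longrightarrow> (\<lambda>i j. c * g i j) \<in> X2Y_ideal"
proof -
  assume "g \<in> X2Y_ideal"
  then obtain a b where ab: "conv2 a" "conv2 b" and
    g: "g = (\<lambda>i j. (if 2 \<le> i then a (i - 2) j else 0) + (if 1 \<le> j then b i (j - 1) else 0))"
    unfolding X2Y_ideal_def by auto
  have "(\<lambda>i j. c * g i j) = (\<lambda>i j. (if 2 \<le> i then c * a (i - 2) j else 0) + (if 1 \<le> j then c * b i (j - 1) else 0))"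
    unfolding g by (auto simp: fun_eq_iff distrib_left)
  then show ?thesis unfolding X2Y_ideal_def using conv2_scale[OF ab(1)] conv2_scale[OF ab(2)] by blast
qed

lemma conv1_poly: assumes "\<forall>n>k. fps_nth e n = 0" shows "conv1 e"
proof -
  have "norm (fps_nth e n) * 1 ^ n \<le> (\<Sum>m\<le>k. norm (fps_nth e m))" for n
  proof (cases "n \<le> k")
    case True then show ?thesis by simp (rule member_le_sum, auto)
  next
    case False then show ?thesis using assms by (simp add: sum_nonneg)
  qed
  then show ?thesis unfolding conv1_def by (intro exI[of _ 1]) auto
qed



lemma main:
  fixes x y :: "complex fps" and G :: "(nat \<Rightarrow> nat \<Rightarrow> complex) set" and b :: complex
  assumes x: "x = fps_X ^ v0" and v: "2 \<le> v0" "v0 < v1" "v1 < k"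
    and ylow: "\<forall>n<v1. fps_nth y n = 0"
    and Gs': "\<forall>g\<in>G. \<forall>c. (\<lambda>i j. c * g i j) \<in> G"
    and G0': "\<forall>g\<in>G. g 0 0 = 0 \<and> g 1 0 = 0"
    and b: "b \<noteq> 0"
  shows "(0, fps_const b * fps_X ^ k) \<in> {(jet k (fps_deriv x * e + pull x y g), jet k (fps_deriv y * e + pull x y h)) | e g h.
      e \<in> M1sq \<and> g \<in> G \<and> h \<in> M2sq} \<longleftrightarrow>
    (\<exists>g\<in>G. \<exists>h\<in>M2sq. has_ord (pull x y h * fps_deriv x - pull x y g * fps_deriv y) (k + v0 - 1))"
  (is "?L \<longleftrightarrow> ?R")
proof -
  have Gs: "\<And>g c. g \<in> G \<Longrightarrow> (\<lambda>i j. c * g i j) \<in> G" using Gs' by blast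
  have G0: "\<And>g. g \<in> G \<Longrightarrow> g 0 0 = 0 \<and> g 1 0 = 0" using G0' by blast
  define d where "d = fps_deriv x"
  define dy where "dy = fps_deriv y"
  define N where "N = k + v0 - 1"
  have dform: "d = fps_const (of_nat v0) * fps_X ^ (v0 - 1)"
    unfolding d_def x by (simp add: fps_deriv_power)
  have dmult: "fps_nth (d * f) m = (if m < v0 - 1 then 0 else of_nat v0 * fps_nth f (m - (v0 - 1)))" for f m
    unfolding dform by (simp add: mult.assoc fps_X_power_mult_nth)
  have dylow: "fps_nth dy j = 0" if "j < v1 - 1" for j
    unfolding dy_def using ylow that by simp
  have jetnth: "fps_nth (jet k f) n = (if n \<le> k then fps_nth f n else 0)" for f n
    by (simp add: jet_def)
  have v0c: "(of_nat v0 :: complex) \<noteq> 0" using v by simp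
  show ?thesis
  proof
    assume ?L
    then obtain e g h where e: "e \<in> M1sq" and g: "g \<in> G" and h: "h \<in> M2sq"
      and j1: "0 = jet k (d * e + pull x y g)" and j2: "fps_const b * fps_X ^ k = jet k (dy * e + pull x y h)"
      unfolding d_def dy_def by blast
    define A where "A = d * e + pull x y g"
    define B where "B = dy * e + pull x y h"
    have hA: "fps_nth A n = 0" if "n \<le> k" for n
      using arg_cong[OF j1, of "\<lambda>f. fps_nth f n"] that unfolding A_def jetnth by simp
    have hB: "fps_nth B n = (if n = k then b else 0)" if "n \<le> k" for n
      using arg_cong[OF j2, of "\<lambda>f. fps_nth f n"] that unfolding B_def jetnth by (auto split: if_splits)
    define D where "D = pull x y h * d - pull x y g * dy"
    have DAB: "D = d * B - A * dy" unfolding D_def A_def B_def by (simp add: algebra_simps)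
    have Ady: "fps_nth (A * dy) m = 0" if "m \<le> N" for m
    proof -
      have "fps_nth (A * dy) m = (\<Sum>i=0..m. fps_nth A i * fps_nth dy (m - i))" by (simp add: fps_mult_nth)
      also have "\<dots> = 0"
      proof (rule sum.neutral, rule ballI)
        fix i assume i: "i \<in> {0..m}"
        show "fps_nth A i * fps_nth dy (m - i) = 0"
        proof (cases "i \<le> k")
          case True then show ?thesis using hA by simp
        next
          case False then have "m - i < v1 - 1" using that v unfolding N_def by auto
          then show ?thesis using dylow by simp
        qed
      qed
      finally show ?thesis .
    qed
    have Dn: "fps_nth D m = (if m = N then of_nat v0 * b else 0)" if "m \<le> N" for m
    proof -
      have "fps_nth D m = fps_nth (d * B) m" unfolding DAB using Ady[OF that] by simp
      also have "\<dots> = (if m = N then of_nat v0 * b else 0)"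
        unfolding dmult using that v hB[of "m - (v0 - 1)"] unfolding N_def by auto
      finally show ?thesis .
    qed
    have "fps_nth D N \<noteq> 0" using Dn[of N] b v0c by simp
    then have "D \<noteq> 0" by auto
    moreover have "subdegree D = N" by (rule subdegreeI) (use Dn \<open>fps_nth D N \<noteq> 0\<close> in auto)
    ultimately show ?R using g h unfolding has_ord_def D_def N_def d_def dy_def by blast
  next
    assume ?R
    then obtain g h where g: "g \<in> G" and h: "h \<in> M2sq"
      and ho: "has_ord (pull x y h * d - pull x y g * dy) N" unfolding d_def dy_def N_def by blast
    define D where "D = pull x y h * d - pull x y g * dy"
    define c where "c = fps_nth D N"
    have Dnz: "D \<noteq> 0" and sD: "subdegree D = N" using ho unfolding has_ord_def D_def by auto
    have cnz: "c \<noteq> 0" unfolding c_def using Dnz sD by (metis nth_subdegree_nonzero)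
    have Dlow: "fps_nth D m = 0" if "m < N" for m using sD that by auto
    define l where "l = of_nat v0 * b / c"
    define g' where "g' = (\<lambda>i j. l * g i j)"
    define h' where "h' = (\<lambda>i j. l * h i j)"
    have g'G: "g' \<in> G" unfolding g'_def by (rule Gs[OF g])
    have h'M: "h' \<in> M2sq" unfolding h'_def by (rule M2sq_scale[OF h])
    define pg where "pg = pull x y g'"
    define ph where "ph = pull x y h'"
    have pg: "pg = fps_const l * pull x y g" unfolding pg_def g'_def by (rule pull_scale)
    have ph: "ph = fps_const l * pull x y h" unfolding ph_def h'_def by (rule pull_scale)
    have pglow: "fps_nth pg n = 0" if "n \<le> v0" for n
      unfolding pg_def using pull_low[OF x _ v(2) ylow _ _ that, of g'] G0[OF g'G] v by auto
    define E where "E = Abs_fps (\<lambda>n. if n \<le> k then - fps_nth pg (n + v0 - 1) / of_nat v0 else 0)"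
    have En: "fps_nth E n = (if n \<le> k then - fps_nth pg (n + v0 - 1) / of_nat v0 else 0)" for n
      unfolding E_def by simp
    have EM: "E \<in> M1sq"
    proof -
      have "conv1 E" by (rule conv1_poly[of k]) (simp add: En)
      moreover have "fps_nth E 0 = 0" using En[of 0] pglow[of "v0 - 1"] by simp
      moreover have "fps_nth E 1 = 0" using En[of 1] pglow[of v0] v by simp
      ultimately show ?thesis unfolding M1sq_def by simp
    qed
    define R where "R = d * E + pg"
    have Rn: "fps_nth R m = 0" if "m \<le> N" for m
    proof (cases "m < v0 - 1")
      case True then show ?thesis using pglow[of m] by (simp add: R_def dmult)
    next
      case False
      then have "m - (v0 - 1) \<le> k" "m - (v0 - 1) + v0 - 1 = m" using that v unfolding N_def by auto
      then show ?thesis using False En[of "m - (v0 - 1)"] v0c by (simp add: R_def dmult)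
    qed
    have j1: "jet k R = 0"
      by (rule fps_ext) (use Rn v in \<open>auto simp: jetnth N_def\<close>)
    define B where "B = dy * E + ph"
    have key: "d * B = dy * R + fps_const l * D"
      unfolding B_def R_def D_def pg ph by (simp add: algebra_simps)
    have dyR: "fps_nth (dy * R) m = 0" if "m \<le> N" for m
    proof -
      have "fps_nth (dy * R) m = (\<Sum>i=0..m. fps_nth dy i * fps_nth R (m - i))" by (simp add: fps_mult_nth)
      also have "\<dots> = 0" using Rn that by (intro sum.neutral) auto
      finally show ?thesis .
    qed
    have Bn: "fps_nth B n = (if n = k then b else 0)" if "n \<le> k" for n
    proof -
      have m: "n + v0 - 1 \<le> N" "\<not> n + v0 - 1 < v0 - 1" "n + v0 - 1 - (v0 - 1) = n" using that v unfolding N_def by auto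
      have "of_nat v0 * fps_nth B n = fps_nth (d * B) (n + v0 - 1)" unfolding dmult using m by simp
      also have "\<dots> = l * fps_nth D (n + v0 - 1)" unfolding key using dyR[OF m(1)] by simp
      also have "\<dots> = (if n = k then l * c else 0)"
        using Dlow[of "n + v0 - 1"] m that v unfolding c_def N_def by auto
      finally have "of_nat v0 * fps_nth B n = (if n = k then of_nat v0 * b else 0)"
        unfolding l_def using cnz by simp
      then show ?thesis using v0c by (auto split: if_splits)
    qed
    have j2: "jet k B = fps_const b * fps_X ^ k"
      by (rule fps_ext) (simp add: jetnth Bn)
    have "(0, fps_const b * fps_X ^ k) = (jet k (d * E + pull x y g'), jet k (dy * E + pull x y h'))"
      using j1 j2 unfolding R_def B_def pg_def ph_def by simp
    then show ?L using EM g'G h'M unfolding d_def dy_def by blast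
  qed
qed



theorem lemma3p1:
  fixes \<Gamma> :: "nat set" and k :: nat and x0 y0 x y :: "complex fps" and b :: complex
  assumes "(x0, y0) \<in> Sigma \<Gamma>"
    and "k > gen1 \<Gamma>"
    and "x = jet k x0" and "y = jet k y0"
    and "b \<noteq> 0"
  shows "((0, fps_const b * fps_X ^ k) \<in> T1 k x y \<longleftrightarrow>
           (\<exists>g\<in>M2sq. \<exists>h\<in>M2sq.
              has_ord (pull x y h * fps_deriv x - pull x y g * fps_deriv y) (k + gen0 \<Gamma> - 1)))
       \<and> ((0, fps_const b * fps_X ^ k) \<in> Ttilde k x y \<longleftrightarrow>
           (\<exists>g\<in>X2Y_ideal. \<exists>h\<in>M2sq.
              has_ord (pull x y h * fps_deriv x - pull x y g * fps_deriv y) (k + gen0 \<Gamma> - 1)))"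
proof -
  have gf: "2 \<le> gen0 \<Gamma>" "gen0 \<Gamma> < gen1 \<Gamma>" "x0 = fps_X ^ gen0 \<Gamma>" "\<forall>n<gen1 \<Gamma>. fps_nth y0 n = 0"
    using gen_facts[OF assms(1)] by auto
  have xX: "x = fps_X ^ gen0 \<Gamma>"
    by (rule fps_ext) (use gf assms(2) in \<open>auto simp: assms(3) jet_def\<close>)
  have yl: "\<forall>n<gen1 \<Gamma>. fps_nth y n = 0" using gf assms(2) by (auto simp: assms(4) jet_def)
  have M0: "\<forall>g\<in>M2sq. g 0 0 = 0 \<and> g 1 0 = 0" by (auto simp: M2sq_def)
  have X0: "\<forall>g\<in>X2Y_ideal. g 0 0 = 0 \<and> g 1 0 = 0" by (auto simp: X2Y_ideal_def)
  have Ms: "\<forall>g\<in>M2sq. \<forall>c. (\<lambda>i j. c * g i j) \<in> M2sq" using M2sq_scale by blast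
  have Xs: "\<forall>g\<in>X2Y_ideal. \<forall>c. (\<lambda>i j. c * g i j) \<in> X2Y_ideal" using X2Y_scale by blast
  show ?thesis
    unfolding T1_def Ttilde_def
    using main[where G=M2sq, OF xX gf(1,2) assms(2) yl Ms M0 assms(5)]
          main[where G=X2Y_ideal, OF xX gf(1,2) assms(2) yl Xs X0 assms(5)] by simp
qed

end
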